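(* Consider the Markov-chain trace semantics of an APPL program $\langle\mathcal{D},S_{\mathsf{main}}\rangle$, fix $m\in\mathbb{N}$, and let $\phi:\Sigma\to\mathcal{M}_{\mathcal{I}}^{(m)}$ be an expected-potential function. Define $\mathbf{\Phi}_n(\omega)=\phi(\omega_n)$ and $\mathbf{Y}_n(\omega)=\langle[A_n(\omega)^k,A_n(\omega)^k]\rangle_{0\le k\le m}\otimes\mathbf{\Phi}_n(\omega)$, where $A_n(\omega)=\alpha_n$ for $\omega_n=\langle\_,\_,\_,\alpha_n\rangle$. Then for all $n\in\mathbb{Z}_{\ge0}$, $\mathbb{E}[\mathbf{Y}_{n+1}\mid\mathcal{F}_n]\sqsubseteq\mathbf{Y}_n$ almost surely.
   Context: APPL: fix a finite set $\mathsf{VID}$ of real-valued program variables and a finite set $\mathsf{FID}$ of function identifiers. Expressions $E::=x\mid c\mid E_1+E_2\mid E_1*E_2$; conditions $L::=\mathsf{true}\mid\neg L\mid L_1\wedge L_2\mid E_1\le E_2$; each distribution $D$ (e.g. $\mathsf{uniform}(a,b)$, $a<b$) has a probability measure $\mu_D$ on $\mathbb{R}$; statements $S::=\mathsf{skip}\mid\mathsf{tick}(c)\mid x:=E\mid x\sim D\mid\mathsf{call}\ f\mid\mathsf{while}\ L\ \mathsf{do}\ S\mid\mathsf{if}\ \mathsf{prob}(p)\ \mathsf{then}\ S_1\ \mathsf{else}\ S_2\mid\mathsf{if}\ L\ \mathsf{then}\ S_1\ \mathsf{else}\ S_2\mid S_1;S_2$ with $c\in\mathbb{R}$, $p\in[0,1]$.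 A program is $\langle\mathcal{D},S_{\mathsf{main}}\rangle$ with $\mathcal{D}$ a finite map from $\mathsf{FID}$ to statements. Continuations $K::=\mathsf{Kstop}\mid\mathsf{Kloop}(L,S,K)\mid\mathsf{Kseq}(S,K)$. A configuration is $\sigma=\langle\gamma,S,K,\alpha\rangle$ with $\gamma:\mathsf{VID}\to\mathbb{R}$ and cost accumulator $\alpha\in\mathbb{R}$; $\Sigma$ is the measurable space of configurations. One-step evaluation is the probability kernel $\sigma\mapsto{\mapsto}(\sigma)$: $\langle\gamma,\mathsf{skip},\mathsf{Kstop},\alpha\rangle\mapsto\delta(\text{itself})$; $\langle\gamma,\mathsf{skip},\mathsf{Kloop}(L,S,K),\alpha\rangle\mapsto\delta(\langle\gamma,S,\mathsf{Kloop}(L,S,K),\alpha\rangle)$ if $\gamma(L)$ true, else $\delta(\langle\gamma,\mathsf{skip},K,\alpha\rangle)$; $\langle\gamma,\mathsf{skip},\mathsf{Kseq}(S,K),\alpha\rangle\mapsto\delta(\langle\gamma,S,K,\alpha\rangle)$; $\langle\gamma,\mathsf{tick}(c),K,\alpha\rangle\mapsto\delta(\langle\gamma,\mathsf{skip},K,\alpha+c\rangle)$; $\langle\gamma,x:=E,K,\alpha\rangle\mapsto\delta(\langle\gamma[x\mapsto\gamma(E)],\mathsf{skip},K,\alpha\rangle)$; $\langle\gamma,x\sim D,K,\alpha\rangle\mapsto$ law of $\langle\gamma[x\mapsto r],\mathsf{skip},K,\alpha\rangle$ with $r\sim\mu_D$; $\langle\gamma,\mathsf{call}\ f,K,\alpha\rangle\mapsto\delta(\langle\gamma,\mathcal{D}(f),K,\alpha\rangle)$;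 probabilistic branch $\mapsto p\,\delta(\langle\gamma,S_1,K,\alpha\rangle)+(1-p)\,\delta(\langle\gamma,S_2,K,\alpha\rangle)$; conditional $\mapsto\delta(\langle\gamma,S_1,K,\alpha\rangle)$ or $\delta(\langle\gamma,S_2,K,\alpha\rangle)$ according to $\gamma(L)$; $\langle\gamma,\mathsf{while}\ L\ \mathsf{do}\ S,K,\alpha\rangle\mapsto\delta(\langle\gamma,\mathsf{skip},\mathsf{Kloop}(L,S,K),\alpha\rangle)$; $\langle\gamma,S_1;S_2,K,\alpha\rangle\mapsto\delta(\langle\gamma,S_1,\mathsf{Kseq}(S_2,K),\alpha\rangle)$. Trace semantics: $\Omega=\Sigma^{\mathbb{Z}_{\ge0}}$ with product $\sigma$-algebra, coordinate filtration $\mathcal{F}_n=\sigma(\omega_0,\dots,\omega_n)$, and $\mathbb{P}$ the law of the Markov chain started at $\langle\lambda\_.0,S_{\mathsf{main}},\mathsf{Kstop},0\rangle$ with kernel $\mapsto$. Interval semiring $\mathcal{I}$: intervals $[a,b]$ ($a\le b$) with $[a,b]+_{\mathcal{I}}[c,d]=[a+c,b+d]$, $[a,b]\cdot_{\mathcal{I}}[c,d]=[\min S,\max S]$, $S=\{ac,ad,bc,bd\}$, ordered by inclusion. $\mathcal{M}_{\mathcal{I}}^{(m)}$: vectors $\langle u_k\rangle_{0\le k\le m}$ of intervals with pointwise $\oplus$, product $\langle u_k\rangle\otimes\langle v_k\rangle=\langle\sum_{i=0}^k\binom{k}{i}\times(u_i\cdot_{\mathcal{I}}v_{k-i})\rangle_{0\le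 k\le m}$, unit $\underline{1}=\langle[1,1],[0,0],\dots,[0,0]\rangle$, and order $\sqsubseteq$ = pointwise inclusion. Expectations of such vectors are taken componentwise on endpoints. An expected-potential function is a measurable $\phi:\Sigma\to\mathcal{M}_{\mathcal{I}}^{(m)}$ with (i) $\phi(\sigma)=\underline{1}$ if $\sigma=\langle\_,\mathsf{skip},\mathsf{Kstop},\_\rangle$, and (ii) for all $\sigma=\langle\_,\_,\_,\alpha\rangle\in\Sigma$, $\phi(\sigma)\sqsupseteq\mathbb{E}_{\sigma'\sim{\mapsto}(\sigma)}\big[\langle[(\alpha'-\alpha)^k,(\alpha'-\alpha)^k]\rangle_{0\le k\le m}\otimes\phi(\sigma')\big]$ where $\sigma'=\langle\_,\_,\_,\alpha'\rangle$. *)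

theory Defs
  imports "HOL-Probability.Probability"
begin

text \<open>'v = VID (program variables), 'f = FID (function identifiers),
  'd = syntax of distributions (interpreted by a map mu :: 'd => real measure).\<close>

datatype 'v expr = EVar 'v | EConst real | EPlus "'v expr" "'v expr" | ETimes "'v expr" "'v expr"

datatype 'v cond = LTrue | LNot "'v cond" | LAnd "'v cond" "'v cond" | LLe "'v expr" "'v expr"

datatype ('v, 'f, 'd) stmt =
    SSkip
  | STick real
  | SAssign 'v "'v expr"
  | SSample 'v 'd
  | SCall 'f
  | SWhile "'v cond" "('v, 'f, 'd) stmt"
  | SProbIf real "('v, 'f, 'd) stmt" "('v, 'f, 'd) stmt"
  | SIf "'v cond" "('v, 'f, 'd) stmt" "('v, 'f, 'd) stmt"
  | SSeq "('v, 'f, 'd) stmt" "('v, 'f, 'd) stmt"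

datatype ('v, 'f, 'd) cont =
    Kstop
  | Kloop "'v cond" "('v, 'f, 'd) stmt" "('v, 'f, 'd) cont"
  | Kseq "('v, 'f, 'd) stmt" "('v, 'f, 'd) cont"

fun wf_stmt :: "('v, 'f, 'd) stmt \<Rightarrow> bool" where
  "wf_stmt (SWhile L S) = wf_stmt S"
| "wf_stmt (SProbIf p S1 S2) = (0 \<le> p \<and> p \<le> 1 \<and> wf_stmt S1 \<and> wf_stmt S2)"
| "wf_stmt (SIf L S1 S2) = (wf_stmt S1 \<and> wf_stmt S2)"
| "wf_stmt (SSeq S1 S2) = (wf_stmt S1 \<and> wf_stmt S2)"
| "wf_stmt _ = True"

fun eval_expr :: "('v \<Rightarrow> real) \<Rightarrow> 'v expr \<Rightarrow> real" where
  "eval_expr \<gamma> (EVar x) = \<gamma> x"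
| "eval_expr \<gamma> (EConst c) = c"
| "eval_expr \<gamma> (EPlus e1 e2) = eval_expr \<gamma> e1 + eval_expr \<gamma> e2"
| "eval_expr \<gamma> (ETimes e1 e2) = eval_expr \<gamma> e1 * eval_expr \<gamma> e2"

fun eval_cond :: "('v \<Rightarrow> real) \<Rightarrow> 'v cond \<Rightarrow> bool" where
  "eval_cond \<gamma> LTrue = True"
| "eval_cond \<gamma> (LNot L) = (\<not> eval_cond \<gamma> L)"
| "eval_cond \<gamma> (LAnd L1 L2) = (eval_cond \<gamma> L1 \<and> eval_cond \<gamma> L2)"
| "eval_cond \<gamma> (LLe e1 e2) = (eval_expr \<gamma> e1 \<le> eval_expr \<gamma> e2)"

type_synonym ('v, 'f, 'd) config = "('v \<Rightarrow> real) \<times> ('v, 'f, 'd) stmt \<times> ('v, 'f, 'd) cont \<times> real"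

definition acc :: "('v, 'f, 'd) config \<Rightarrow> real" where
  "acc \<sigma> = snd (snd (snd \<sigma>))"

text \<open>Sigma is the disjoint union, over the syntactic part (S,K), of copies of
  R^VID x R with their Borel sigma-algebras: a set of configurations is measurable
  iff each of its (S,K)-slices is Borel.\<close>
definition configM :: "('v, 'f, 'd) config measure" where
  "configM = sigma UNIV
     {A. \<forall>S K. (\<lambda>(\<gamma>, \<alpha>). (\<gamma>, S, K, \<alpha>)) -` A
            \<in> sets ((Pi\<^sub>M UNIV (\<lambda>_::'v. (borel :: real measure))) \<Otimes>\<^sub>M (borel :: real measure))}"

fun step :: "('f \<Rightarrow> ('v, 'f, 'd) stmt) \<Rightarrow> ('d \<Rightarrow> real measure)
             \<Rightarrow> ('v, 'f, 'd) config \<Rightarrow> ('v, 'f, 'd) config measure" where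
  "step D mu (\<gamma>, SSkip, Kstop, \<alpha>) = return configM (\<gamma>, SSkip, Kstop, \<alpha>)"
| "step D mu (\<gamma>, SSkip, Kloop L S K, \<alpha>) =
     (if eval_cond \<gamma> L then return configM (\<gamma>, S, Kloop L S K, \<alpha>)
      else return configM (\<gamma>, SSkip, K, \<alpha>))"
| "step D mu (\<gamma>, SSkip, Kseq S K, \<alpha>) = return configM (\<gamma>, S, K, \<alpha>)"
| "step D mu (\<gamma>, STick c, K, \<alpha>) = return configM (\<gamma>, SSkip, K, \<alpha> + c)"
| "step D mu (\<gamma>, SAssign x E, K, \<alpha>) = return configM (\<gamma>(x := eval_expr \<gamma> E), SSkip, K, \<alpha>)"
| "step D mu (\<gamma>, SSample x d, K, \<alpha>) = distr (mu d) configM (\<lambda>r. (\<gamma>(x := r), SSkip, K, \<alpha>))"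
| "step D mu (\<gamma>, SCall f, K, \<alpha>) = return configM (\<gamma>, D f, K, \<alpha>)"
| "step D mu (\<gamma>, SProbIf p S1 S2, K, \<alpha>) =
     distr (measure_pmf (bernoulli_pmf p)) configM
       (\<lambda>b. if b then (\<gamma>, S1, K, \<alpha>) else (\<gamma>, S2, K, \<alpha>))"
| "step D mu (\<gamma>, SIf L S1 S2, K, \<alpha>) =
     (if eval_cond \<gamma> L then return configM (\<gamma>, S1, K, \<alpha>) else return configM (\<gamma>, S2, K, \<alpha>))"
| "step D mu (\<gamma>, SWhile L S, K, \<alpha>) = return configM (\<gamma>, SSkip, Kloop L S K, \<alpha>)"
| "step D mu (\<gamma>, SSeq S1 S2, K, \<alpha>) = return configM (\<gamma>, S1, Kseq S2 K, \<alpha>)"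

definition traceM :: "(nat \<Rightarrow> ('v, 'f, 'd) config) measure" where
  "traceM = Pi\<^sub>M UNIV (\<lambda>_. configM)"

definition filt :: "nat \<Rightarrow> (nat \<Rightarrow> ('v, 'f, 'd) config) measure" where
  "filt n = sigma (space traceM)
     {{\<omega> \<in> space traceM. \<omega> i \<in> A} | i A. i \<le> n \<and> A \<in> sets configM}"

definition init_config :: "('v, 'f, 'd) stmt \<Rightarrow> ('v, 'f, 'd) config" where
  "init_config S = (\<lambda>_. 0, S, Kstop, 0)"

text \<open>P is the law of the Markov chain with kernel step started at
  <lambda _. 0, S_main, Kstop, 0>: omega_0 is the initial configuration a.s., and the
  conditional law of omega_(n+1) given F_n is step(omega_n).\<close>
definition is_trace_law ::
  "('f \<Rightarrow> ('v, 'f, 'd) stmt) \<Rightarrow> ('d \<Rightarrow> real measure) \<Rightarrow> ('v, 'f, 'd) stmt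
   \<Rightarrow> (nat \<Rightarrow> ('v, 'f, 'd) config) measure \<Rightarrow> bool" where
  "is_trace_law D mu Smain P \<longleftrightarrow>
     sets P = sets traceM \<and> prob_space P \<and>
     (AE \<omega> in P. \<omega> 0 = init_config Smain) \<and>
     (\<forall>n. \<forall>A \<in> sets configM. \<forall>B \<in> sets (filt n).
        emeasure P (B \<inter> {\<omega> \<in> space traceM. \<omega> (Suc n) \<in> A})
          = (\<integral>\<^sup>+ \<omega>. indicator B \<omega> * emeasure (step D mu (\<omega> n)) A \<partial>P))"

text \<open>An interval [a,b] is the pair (a,b); a vector <u_k>_(0<=k<=m) is a function
  nat => real x real of which only the indices k <= m are relevant.\<close>
type_synonym ivec = "nat \<Rightarrow> real \<times> real"

definition imul :: "real \<times> real \<Rightarrow> real \<times> real \<Rightarrow> real \<times> real" where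
  "imul u v = (let S = {fst u * fst v, fst u * snd v, snd u * fst v, snd u * snd v}
               in (Min S, Max S))"

definition otimes :: "ivec \<Rightarrow> ivec \<Rightarrow> ivec" where
  "otimes u v = (\<lambda>k. ((\<Sum>i\<le>k. real (k choose i) * fst (imul (u i) (v (k - i)))),
                       (\<Sum>i\<le>k. real (k choose i) * snd (imul (u i) (v (k - i))))))"

definition ione :: ivec where
  "ione = (\<lambda>k. if k = 0 then (1, 1) else (0, 0))"

definition pw :: "real \<Rightarrow> ivec" where
  "pw a = (\<lambda>k. (a ^ k, a ^ k))"

definition ivec_le :: "nat \<Rightarrow> ivec \<Rightarrow> ivec \<Rightarrow> bool" where
  "ivec_le m u v \<longleftrightarrow> (\<forall>k\<le>m. fst (v k) \<le> fst (u k) \<and> snd (u k) \<le> snd (v k))"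

definition expected_potential ::
  "('f \<Rightarrow> ('v, 'f, 'd) stmt) \<Rightarrow> ('d \<Rightarrow> real measure) \<Rightarrow> nat
   \<Rightarrow> (('v, 'f, 'd) config \<Rightarrow> ivec) \<Rightarrow> bool" where
  "expected_potential D mu m \<phi> \<longleftrightarrow>
     \<comment> \<open>measurable, with values in M_I^(m) (genuine intervals)\<close>
     (\<forall>k\<le>m. (\<lambda>\<sigma>. fst (\<phi> \<sigma> k)) \<in> borel_measurable configM
            \<and> (\<lambda>\<sigma>. snd (\<phi> \<sigma> k)) \<in> borel_measurable configM) \<and>
     (\<forall>\<sigma>. \<forall>k\<le>m. fst (\<phi> \<sigma> k) \<le> snd (\<phi> \<sigma> k)) \<and>
     \<comment> \<open>(i)\<close>
     (\<forall>\<gamma> \<alpha>. \<forall>k\<le>m. \<phi> (\<gamma>, SSkip, Kstop, \<alpha>) k = ione k) \<and>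
     \<comment> \<open>(ii), expectations taken componentwise on endpoints (and required to exist)\<close>
     (\<forall>\<sigma>. \<forall>k\<le>m.
        integrable (step D mu \<sigma>) (\<lambda>\<sigma>'. fst (otimes (pw (acc \<sigma>' - acc \<sigma>)) (\<phi> \<sigma>') k)) \<and>
        integrable (step D mu \<sigma>) (\<lambda>\<sigma>'. snd (otimes (pw (acc \<sigma>' - acc \<sigma>)) (\<phi> \<sigma>') k)) \<and>
        fst (\<phi> \<sigma> k) \<le> (\<integral>\<sigma>'. fst (otimes (pw (acc \<sigma>' - acc \<sigma>)) (\<phi> \<sigma>') k) \<partial>step D mu \<sigma>) \<and>
        (\<integral>\<sigma>'. snd (otimes (pw (acc \<sigma>' - acc \<sigma>)) (\<phi> \<sigma>') k) \<partial>step D mu \<sigma>) \<le> snd (\<phi> \<sigma> k))"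

definition Ytrace :: "(('v, 'f, 'd) config \<Rightarrow> ivec) \<Rightarrow> nat \<Rightarrow> (nat \<Rightarrow> ('v, 'f, 'd) config) \<Rightarrow> ivec" where
  "Ytrace \<phi> n \<omega> = otimes (pw (acc (\<omega> n))) (\<phi> (\<omega> n))"

end

theory Submission
  imports Defs
begin


abbreviation PB :: "(('v \<Rightarrow> real) \<times> real) measure" where
  "PB \<equiv> (Pi\<^sub>M UNIV (\<lambda>_::'v. (borel :: real measure))) \<Otimes>\<^sub>M (borel :: real measure)"

definition Gc :: "('v, 'f, 'd) config set set" where
  "Gc = {A. \<forall>S K. (\<lambda>(\<gamma>, \<alpha>). (\<gamma>, S, K, \<alpha>)) -` A \<in> sets (PB :: (('v \<Rightarrow> real) \<times> real) measure)}"

lemma configM_eq: "configM = sigma UNIV Gc"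
  unfolding configM_def Gc_def by simp

lemma space_configM[simp]: "space configM = UNIV"
  by (simp add: configM_def)

lemma Gc_sets: "Gc \<subseteq> sets configM"
  unfolding configM_eq by auto

lemma slice_meas: "(\<lambda>(\<gamma>, \<alpha>). (\<gamma>, S, K, \<alpha>)) \<in> measurable PB configM"
  unfolding configM_eq
  by (rule measurable_measure_of) (auto simp: Gc_def space_pair_measure)

lemma meas_configI:
  assumes "\<And>S K. (\<lambda>(\<gamma>, \<alpha>). F (\<gamma>, S, K, \<alpha>)) \<in> measurable PB N"
  shows "F \<in> measurable configM N"
proof (rule measurableI)
  fix x show "F x \<in> space N"
    using measurable_space[OF assms[of "fst (snd x)" "fst (snd (snd x))"], of "(fst x, snd (snd (snd x)))"]
    by (auto simp: space_pair_measure space_PiM)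
next
  fix A assume A: "A \<in> sets N"
  have "F -` A \<in> Gc"
    unfolding Gc_def
  proof (safe)
    fix S K
    have "(\<lambda>(\<gamma>, \<alpha>). F (\<gamma>, S, K, \<alpha>)) -` A \<in> sets PB"
      using measurable_sets[OF assms A] by (simp add: space_pair_measure space_PiM)
    moreover have "(\<lambda>(\<gamma>, \<alpha>). (\<gamma>, S, K, \<alpha>)) -` F -` A = (\<lambda>(\<gamma>, \<alpha>). F (\<gamma>, S, K, \<alpha>)) -` A"
      by auto
    ultimately show "(\<lambda>(\<gamma>, \<alpha>). (\<gamma>, S, K, \<alpha>)) -` F -` A \<in> sets PB" by simp
  qed
  then show "F -` A \<inter> space configM \<in> sets configM" using Gc_sets by auto
qed

lemma meas_tuple[measurable (raw)]:
  assumes "g \<in> measurable M (Pi\<^sub>M UNIV (\<lambda>_::'v. (borel :: real measure)))"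
      and "a \<in> borel_measurable M"
  shows "(\<lambda>x. (g x, S, K, a x)) \<in> measurable M (configM :: ('v, 'f, 'd) config measure)"
proof -
  have "(\<lambda>x. (g x, a x)) \<in> measurable M PB" using assms by measurable
  from measurable_comp[OF this slice_meas[where S=S and K=K]]
  show ?thesis by (simp add: comp_def)
qed

lemma acc_meas[measurable]: "acc \<in> borel_measurable configM"
  by (rule meas_configI) (simp add: acc_def case_prod_beta)

lemma eval_expr_meas[measurable]:
  "(\<lambda>\<gamma>. eval_expr \<gamma> E) \<in> borel_measurable (Pi\<^sub>M UNIV (\<lambda>_::'v. (borel :: real measure)))"
  by (induction E) auto

lemma eval_cond_meas[measurable]:
  "Measurable.pred (Pi\<^sub>M UNIV (\<lambda>_::'v. (borel :: real measure))) (\<lambda>\<gamma>. eval_cond \<gamma> L)"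
proof (induction L)
  case (LLe e1 e2)
  show ?case unfolding Measurable.pred_def
    using borel_measurable_le[OF eval_expr_meas eval_expr_meas, of e1 e2] by simp
qed auto

lemma upd_meas[measurable (raw)]:
  assumes "g \<in> measurable M (Pi\<^sub>M UNIV (\<lambda>_::'v. (borel :: real measure)))"
      and "r \<in> borel_measurable M"
  shows "(\<lambda>x. (g x)(v := r x)) \<in> measurable M (Pi\<^sub>M UNIV (\<lambda>_::'v. (borel :: real measure)))"
  by (rule measurable_fun_upd[where J=UNIV]) (use assms in auto)



lemma sets_step[simp, measurable_cong]:
  assumes "\<forall>d. sets (mu d) = sets borel"
  shows "sets (step D mu \<sigma>) = sets configM"
  by (induction D mu \<sigma> rule: step.induct) auto

lemma sample_map_meas:
  assumes "sets M = sets (borel :: real measure)"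
  shows "(\<lambda>r. (\<gamma>(x := r), SSkip, K, \<alpha>)) \<in> measurable M configM"
proof -
  have "(\<lambda>r. \<gamma>(x := r)) \<in> measurable borel (Pi\<^sub>M UNIV (\<lambda>_. borel))"
    by (rule upd_meas) (auto simp: space_PiM)
  then have "(\<lambda>r. (\<gamma>(x := r), SSkip, K, \<alpha>)) \<in> measurable borel configM"
    by (rule meas_tuple) simp
  then show ?thesis using measurable_cong_sets[OF assms refl] by metis
qed

lemma nn_bern: "(\<integral>\<^sup>+ b. f b \<partial>measure_pmf (bernoulli_pmf p))
   = ennreal (pmf (bernoulli_pmf p) True) * f True + ennreal (pmf (bernoulli_pmf p) False) * f False"
  by (simp add: nn_integral_measure_pmf nn_integral_count_space_finite UNIV_bool)

lemma K_meas:
  assumes h[measurable]: "h \<in> borel_measurable configM"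
    and dists: "\<forall>d. prob_space (mu d) \<and> sets (mu d) = sets borel"
  shows "(\<lambda>\<sigma>. \<integral>\<^sup>+ \<sigma>'. h \<sigma>' \<partial>step D mu \<sigma>) \<in> borel_measurable configM"
proof (rule meas_configI)
  fix S K
  show "(\<lambda>(\<gamma>, \<alpha>). \<integral>\<^sup>+ \<sigma>'. h \<sigma>' \<partial>step D mu (\<gamma>, S, K, \<alpha>)) \<in> borel_measurable PB"
  proof (cases S)
    case SSkip
    then show ?thesis
    proof (cases K)
      case Kstop then show ?thesis using SSkip by (simp add: nn_integral_return case_prod_beta)
    next
      case (Kloop L S' K')
      have "(\<lambda>(\<gamma>, \<alpha>). \<integral>\<^sup>+ \<sigma>'. h \<sigma>' \<partial>step D mu (\<gamma>, S, K, \<alpha>)) =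
        (\<lambda>p. if eval_cond (fst p) L then h (fst p, S', Kloop L S' K', snd p) else h (fst p, SSkip, K', snd p))"
        using SSkip Kloop by (auto simp: nn_integral_return fun_eq_iff)
      then show ?thesis by simp
    next
      case (Kseq S' K') then show ?thesis using SSkip by (simp add: nn_integral_return case_prod_beta)
    qed
  next
    case (STick c) then show ?thesis by (simp add: nn_integral_return case_prod_beta)
  next
    case (SAssign x E) then show ?thesis by (simp add: nn_integral_return case_prod_beta)
  next
    case (SSample x d)
    have sd: "sets (mu d) = sets borel" and pd: "prob_space (mu d)" using dists by auto
    then interpret prob_space "mu d" by simp
    have "(\<lambda>(p, r). h ((fst p)(x := r), SSkip, K, snd p)) \<in> borel_measurable (PB \<Otimes>\<^sub>M borel)"
      by measurable
    then have "(\<lambda>(p, r). h ((fst p)(x := r), SSkip, K, snd p)) \<in> borel_measurable (PB \<Otimes>\<^sub>M mu d)"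
      using measurable_cong_sets[OF sets_pair_measure_cong[OF refl sd] refl] by metis
    from borel_measurable_nn_integral[OF this]
    have "(\<lambda>p. \<integral>\<^sup>+ r. h ((fst p)(x := r), SSkip, K, snd p) \<partial>mu d) \<in> borel_measurable PB"
      by simp
    moreover have "(\<lambda>(\<gamma>, \<alpha>). \<integral>\<^sup>+ \<sigma>'. h \<sigma>' \<partial>step D mu (\<gamma>, S, K, \<alpha>)) =
        (\<lambda>p. \<integral>\<^sup>+ r. h ((fst p)(x := r), SSkip, K, snd p) \<partial>mu d)"
      using SSample by (auto simp: fun_eq_iff nn_integral_distr sample_map_meas[OF sd])
    ultimately show ?thesis by simp
  next
    case (SCall f) then show ?thesis by (simp add: nn_integral_return case_prod_beta)
  next
    case (SWhile L S') then show ?thesis by (simp add: nn_integral_return case_prod_beta)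
  next
    case (SProbIf p S1 S2)
    have "(\<lambda>(\<gamma>, \<alpha>). \<integral>\<^sup>+ \<sigma>'. h \<sigma>' \<partial>step D mu (\<gamma>, S, K, \<alpha>)) =
        (\<lambda>q. ennreal (pmf (bernoulli_pmf p) True) * h (fst q, S1, K, snd q)
           + ennreal (pmf (bernoulli_pmf p) False) * h (fst q, S2, K, snd q))"
      using SProbIf by (auto simp: fun_eq_iff nn_integral_distr nn_bern)
    then show ?thesis by simp
  next
    case (SIf L S1 S2)
    have "(\<lambda>(\<gamma>, \<alpha>). \<integral>\<^sup>+ \<sigma>'. h \<sigma>' \<partial>step D mu (\<gamma>, S, K, \<alpha>)) =
        (\<lambda>p. if eval_cond (fst p) L then h (fst p, S1, K, snd p) else h (fst p, S2, K, snd p))"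
      using SIf by (auto simp: nn_integral_return fun_eq_iff)
    then show ?thesis by simp
  next
    case (SSeq S1 S2) then show ?thesis by (simp add: nn_integral_return case_prod_beta)
  qed
qed



lemma space_traceM[simp]: "space traceM = UNIV"
  by (simp add: traceM_def space_PiM)

definition Gf :: "nat \<Rightarrow> (nat \<Rightarrow> ('v, 'f, 'd) config) set set" where
  "Gf n = {{\<omega> \<in> space traceM. \<omega> i \<in> A} | i A. i \<le> n \<and> A \<in> sets configM}"

lemma filt_eq: "filt n = sigma (space traceM) (Gf n)"
  by (simp add: filt_def Gf_def)

lemma space_filt[simp]: "space (filt n) = UNIV"
  by (simp add: filt_def)

lemma sets_filt: "sets (filt n) = sigma_sets UNIV (Gf n)"
  unfolding filt_eq by (subst sets_measure_of) (auto simp: Gf_def)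

lemma coord_meas_trace[measurable]: "(\<lambda>\<omega>. \<omega> i) \<in> measurable traceM configM"
  unfolding traceM_def by (rule measurable_component_singleton) simp

lemma sets_filt_sub: "sets (filt n) \<subseteq> sets traceM"
proof -
  have *: "{\<omega>. \<omega> i \<in> A} \<in> sets traceM" if "A \<in> sets configM" for i A
    using measurable_sets[OF coord_meas_trace that, of i] by (simp add: vimage_def)
  have "Gf n \<subseteq> sets traceM"
    using * by (auto simp: Gf_def)
  from sets.sigma_sets_subset[OF this] show ?thesis by (simp add: sets_filt)
qed

lemma coord_meas_filt:
  assumes "i \<le> n" shows "(\<lambda>\<omega>. \<omega> i) \<in> measurable (filt n) configM"
proof (rule measurableI)
  fix A assume "A \<in> sets configM"
  then have "{\<omega>. \<omega> i \<in> A} \<in> Gf n" using assms unfolding Gf_def by auto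
  then show "(\<lambda>\<omega>. \<omega> i) -` A \<inter> space (filt n) \<in> sets (filt n)"
    by (auto simp: sets_filt vimage_def)
qed simp

locale tr =
  fixes D :: "'f \<Rightarrow> ('v, 'f, 'd) stmt" and mu :: "'d \<Rightarrow> real measure"
    and Smain :: "('v, 'f, 'd) stmt" and P :: "(nat \<Rightarrow> ('v, 'f, 'd) config) measure"
  assumes dists: "\<forall>d. prob_space (mu d) \<and> sets (mu d) = sets borel"
    and law: "is_trace_law D mu Smain P"
begin

lemma setsP[measurable_cong]: "sets P = sets traceM"
  using law by (simp add: is_trace_law_def)

lemma spaceP[simp]: "space P = UNIV"
  using sets_eq_imp_space_eq[OF setsP] by simp

lemma probP: "prob_space P"
  using law by (simp add: is_trace_law_def)

lemma sets_step'[simp]: "sets (step D mu \<sigma>) = sets configM"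
  using dists by simp

lemma meas_step: "h \<in> borel_measurable configM \<Longrightarrow> h \<in> borel_measurable (step D mu \<sigma>)"
  using measurable_cong_sets[OF sets_step' refl] by metis

lemma coord_meas[measurable]: "(\<lambda>\<omega>. \<omega> i) \<in> measurable P configM"
  using measurable_cong_sets[OF setsP refl] coord_meas_trace by metis

lemma subalg: "subalgebra P (filt n)"
  unfolding subalgebra_def
proof
  show "space (filt n) = space P" by simp
  show "sets (filt n) \<subseteq> sets P" using sets_filt_sub[of n] unfolding setsP .
qed

lemma sfs: "sigma_finite_subalgebra P (filt n)"
proof -
  interpret prob_space P by (rule probP)
  interpret finite_measure "restr_to_subalg P (filt n)"
    by (rule finite_measure_restr_to_subalg[OF subalg]) unfold_locales
  show ?thesis
    unfolding sigma_finite_subalgebra_def using subalg sigma_finite_measure_axioms by blast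
qed

lemma filt_setsP: "B \<in> sets (filt n) \<Longrightarrow> B \<in> sets P"
  using sets_filt_sub setsP by auto

lemma Kf_meas:
  assumes "h \<in> borel_measurable configM"
  shows "(\<lambda>\<omega>. \<integral>\<^sup>+ \<sigma>'. h \<sigma>' \<partial>step D mu (\<omega> n)) \<in> borel_measurable (filt n)"
  using measurable_comp[OF coord_meas_filt[of n n] K_meas[OF assms dists]] by (simp add: comp_def)

lemma Kf_measP:
  assumes "h \<in> borel_measurable configM"
  shows "(\<lambda>\<omega>. \<integral>\<^sup>+ \<sigma>'. h \<sigma>' \<partial>step D mu (\<omega> n)) \<in> borel_measurable P"
  using measurable_comp[OF coord_meas[of n] K_meas[OF assms dists]] by (simp add: comp_def)

lemma kern_nn:
  assumes h: "h \<in> borel_measurable configM" and B: "B \<in> sets (filt n)"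
  shows "(\<integral>\<^sup>+ \<omega>. indicator B \<omega> * h (\<omega> (Suc n)) \<partial>P)
       = (\<integral>\<^sup>+ \<omega>. indicator B \<omega> * (\<integral>\<^sup>+ \<sigma>'. h \<sigma>' \<partial>step D mu (\<omega> n)) \<partial>P)"
  using h
proof (induction h rule: borel_measurable_induct)
  case (cong f g)
  then have "f = g" by auto
  then show ?case using cong by simp
next
  case (set A)
  have BP[measurable]: "B \<in> sets P" by (rule filt_setsP[OF B])
  have "(\<integral>\<^sup>+ \<omega>. indicator B \<omega> * indicator A (\<omega> (Suc n)) \<partial>P)
      = (\<integral>\<^sup>+ \<omega>. indicator (B \<inter> {\<omega> \<in> space traceM. \<omega> (Suc n) \<in> A}) \<omega> \<partial>P)"
    by (intro nn_integral_cong) (auto simp: indicator_def)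
  also have "\<dots> = emeasure P (B \<inter> {\<omega> \<in> space traceM. \<omega> (Suc n) \<in> A})"
    using set by (intro nn_integral_indicator) (simp)
  also have "\<dots> = (\<integral>\<^sup>+ \<omega>. indicator B \<omega> * emeasure (step D mu (\<omega> n)) A \<partial>P)"
    using law set B unfolding is_trace_law_def by blast
  also have "\<dots> = (\<integral>\<^sup>+ \<omega>. indicator B \<omega> * (\<integral>\<^sup>+ \<sigma>'. indicator A \<sigma>' \<partial>step D mu (\<omega> n)) \<partial>P)"
    using set by (intro nn_integral_cong) simp
  finally show ?case .
next
  case (mult u c)
  have BP[measurable]: "B \<in> sets P" by (rule filt_setsP[OF B])
  note [measurable] = mult(2) Kf_measP[OF mult(2)]
  have "(\<integral>\<^sup>+ \<omega>. indicator B \<omega> * (c * u (\<omega> (Suc n))) \<partial>P)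
     = (\<integral>\<^sup>+ \<omega>. c * (indicator B \<omega> * u (\<omega> (Suc n))) \<partial>P)"
    by (simp add: ac_simps)
  also have "\<dots> = c * (\<integral>\<^sup>+ \<omega>. indicator B \<omega> * u (\<omega> (Suc n)) \<partial>P)"
    by (rule nn_integral_cmult) measurable
  also have "\<dots> = c * (\<integral>\<^sup>+ \<omega>. indicator B \<omega> * (\<integral>\<^sup>+ \<sigma>'. u \<sigma>' \<partial>step D mu (\<omega> n)) \<partial>P)"
    using mult by simp
  also have "\<dots> = (\<integral>\<^sup>+ \<omega>. c * (indicator B \<omega> * (\<integral>\<^sup>+ \<sigma>'. u \<sigma>' \<partial>step D mu (\<omega> n))) \<partial>P)"
    by (rule nn_integral_cmult[symmetric]) measurable
  also have "\<dots> = (\<integral>\<^sup>+ \<omega>. indicator B \<omega> * (\<integral>\<^sup>+ \<sigma>'. c * u \<sigma>' \<partial>step D mu (\<omega> n)) \<partial>P)"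
  proof (intro nn_integral_cong)
    fix \<omega>
    have "(\<integral>\<^sup>+ \<sigma>'. c * u \<sigma>' \<partial>step D mu (\<omega> n)) = c * (\<integral>\<^sup>+ \<sigma>'. u \<sigma>' \<partial>step D mu (\<omega> n))"
      by (rule nn_integral_cmult) (use meas_step[OF mult(2)] in simp)
    then show "c * (indicator B \<omega> * (\<integral>\<^sup>+ \<sigma>'. u \<sigma>' \<partial>step D mu (\<omega> n))) =
         indicator B \<omega> * (\<integral>\<^sup>+ \<sigma>'. c * u \<sigma>' \<partial>step D mu (\<omega> n))" by (simp add: ac_simps)
  qed
  finally show ?case .
next
  case (add u v)
  have BP[measurable]: "B \<in> sets P" by (rule filt_setsP[OF B])
  note [measurable] = \<open>u \<in> borel_measurable configM\<close> \<open>v \<in> borel_measurable configM\<close>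
    Kf_measP[OF \<open>u \<in> borel_measurable configM\<close>] Kf_measP[OF \<open>v \<in> borel_measurable configM\<close>]
  have "(\<integral>\<^sup>+ \<omega>. indicator B \<omega> * (v (\<omega> (Suc n)) + u (\<omega> (Suc n))) \<partial>P)
     = (\<integral>\<^sup>+ \<omega>. indicator B \<omega> * v (\<omega> (Suc n)) + indicator B \<omega> * u (\<omega> (Suc n)) \<partial>P)"
    by (simp add: distrib_left)
  also have "\<dots> = (\<integral>\<^sup>+ \<omega>. indicator B \<omega> * v (\<omega> (Suc n)) \<partial>P) + (\<integral>\<^sup>+ \<omega>. indicator B \<omega> * u (\<omega> (Suc n)) \<partial>P)"
    by (rule nn_integral_add) measurable
  also have "\<dots> = (\<integral>\<^sup>+ \<omega>. indicator B \<omega> * (\<integral>\<^sup>+ \<sigma>'. v \<sigma>' \<partial>step D mu (\<omega> n)) \<partial>P)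
      + (\<integral>\<^sup>+ \<omega>. indicator B \<omega> * (\<integral>\<^sup>+ \<sigma>'. u \<sigma>' \<partial>step D mu (\<omega> n)) \<partial>P)"
    using add by simp
  also have "\<dots> = (\<integral>\<^sup>+ \<omega>. indicator B \<omega> * (\<integral>\<^sup>+ \<sigma>'. v \<sigma>' \<partial>step D mu (\<omega> n))
      + indicator B \<omega> * (\<integral>\<^sup>+ \<sigma>'. u \<sigma>' \<partial>step D mu (\<omega> n)) \<partial>P)"
    by (rule nn_integral_add[symmetric]) measurable
  also have "\<dots> = (\<integral>\<^sup>+ \<omega>. indicator B \<omega> * (\<integral>\<^sup>+ \<sigma>'. v \<sigma>' + u \<sigma>' \<partial>step D mu (\<omega> n)) \<partial>P)"
  proof (intro nn_integral_cong)
    fix \<omega>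
    have "(\<integral>\<^sup>+ \<sigma>'. v \<sigma>' + u \<sigma>' \<partial>step D mu (\<omega> n)) =
       (\<integral>\<^sup>+ \<sigma>'. v \<sigma>' \<partial>step D mu (\<omega> n)) + (\<integral>\<^sup>+ \<sigma>'. u \<sigma>' \<partial>step D mu (\<omega> n))"
      by (rule nn_integral_add) (use meas_step[OF \<open>u \<in> borel_measurable configM\<close>] meas_step[OF \<open>v \<in> borel_measurable configM\<close>] in simp_all)
    then show "indicator B \<omega> * (\<integral>\<^sup>+ \<sigma>'. v \<sigma>' \<partial>step D mu (\<omega> n)) +
         indicator B \<omega> * (\<integral>\<^sup>+ \<sigma>'. u \<sigma>' \<partial>step D mu (\<omega> n)) =
         indicator B \<omega> * (\<integral>\<^sup>+ \<sigma>'. v \<sigma>' + u \<sigma>' \<partial>step D mu (\<omega> n))"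
      by (simp add: distrib_left)
  qed
  finally show ?case .
next
  case (seq U)
  have BP[measurable]: "B \<in> sets P" by (rule filt_setsP[OF B])
  note [measurable] = \<open>\<And>i. U i \<in> borel_measurable configM\<close> Kf_measP[OF \<open>\<And>i. U i \<in> borel_measurable configM\<close>]
  have incK: "incseq (\<lambda>i \<omega>. indicator B \<omega> * (\<integral>\<^sup>+ \<sigma>'. U i \<sigma>' \<partial>step D mu (\<omega> n)))"
    using \<open>incseq U\<close> by (auto simp: incseq_def le_fun_def intro!: mult_left_mono nn_integral_mono)
  have incU: "incseq (\<lambda>i \<omega>. indicator B \<omega> * U i (\<omega> (Suc n)))"
    unfolding incseq_def le_fun_def
  proof (intro allI impI)
    fix i j :: nat and \<omega> :: "nat \<Rightarrow> ('v, 'f, 'd) config" assume "i \<le> j"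
    then have "U i \<le> U j"
      using \<open>incseq U\<close> by (simp add: incseq_def)
    then have "U i (\<omega> (Suc n)) \<le> U j (\<omega> (Suc n))" by (rule le_funD)
    then show "indicator B \<omega> * U i (\<omega> (Suc n)) \<le> indicator B \<omega> * U j (\<omega> (Suc n))"
      by (rule mult_left_mono) simp
  qed
  have "(\<integral>\<^sup>+ \<omega>. indicator B \<omega> * (SUP i. U i) (\<omega> (Suc n)) \<partial>P)
     = (\<integral>\<^sup>+ \<omega>. (SUP i. indicator B \<omega> * U i (\<omega> (Suc n))) \<partial>P)"
    by (intro nn_integral_cong) (simp add: SUP_apply SUP_mult_left_ennreal image_comp)
  also have "\<dots> = (SUP i. (\<integral>\<^sup>+ \<omega>. indicator B \<omega> * U i (\<omega> (Suc n)) \<partial>P))"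
    by (rule nn_integral_monotone_convergence_SUP[OF incU]) measurable
  also have "\<dots> = (SUP i. (\<integral>\<^sup>+ \<omega>. indicator B \<omega> * (\<integral>\<^sup>+ \<sigma>'. U i \<sigma>' \<partial>step D mu (\<omega> n)) \<partial>P))"
    using seq by simp
  also have "\<dots> = (\<integral>\<^sup>+ \<omega>. (SUP i. indicator B \<omega> * (\<integral>\<^sup>+ \<sigma>'. U i \<sigma>' \<partial>step D mu (\<omega> n))) \<partial>P)"
    by (rule nn_integral_monotone_convergence_SUP[OF incK, symmetric]) measurable
  also have "\<dots> = (\<integral>\<^sup>+ \<omega>. indicator B \<omega> * (\<integral>\<^sup>+ \<sigma>'. (SUP i. U i) \<sigma>' \<partial>step D mu (\<omega> n)) \<partial>P)"
  proof (intro nn_integral_cong)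
    fix \<omega>
    have "(\<integral>\<^sup>+ \<sigma>'. (SUP i. U i \<sigma>') \<partial>step D mu (\<omega> n)) = (SUP i. (\<integral>\<^sup>+ \<sigma>'. U i \<sigma>' \<partial>step D mu (\<omega> n)))"
      by (rule nn_integral_monotone_convergence_SUP) (use \<open>incseq U\<close> meas_step[OF \<open>\<And>i. U i \<in> borel_measurable configM\<close>] in \<open>simp_all add: incseq_def le_fun_def\<close>)
    then show "(SUP i. indicator B \<omega> * (\<integral>\<^sup>+ \<sigma>'. U i \<sigma>' \<partial>step D mu (\<omega> n))) =
         indicator B \<omega> * (\<integral>\<^sup>+ \<sigma>'. (SUP i. U i) \<sigma>' \<partial>step D mu (\<omega> n))"
      by (simp add: SUP_mult_left_ennreal SUP_apply image_comp)
  qed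
  finally show ?case .
qed

end


context tr begin

lemma nn_cexp:
  assumes g: "g \<in> borel_measurable configM"
  shows "AE \<omega> in P. (\<integral>\<^sup>+ \<sigma>'. g \<sigma>' \<partial>step D mu (\<omega> n)) = nn_cond_exp P (filt n) (\<lambda>\<omega>. g (\<omega> (Suc n))) \<omega>"
proof -
  interpret sigma_finite_subalgebra P "filt n" by (rule sfs)
  show ?thesis
  proof (rule nn_cond_exp_charact)
    fix A :: "(nat \<Rightarrow> ('v, 'f, 'd) config) set" assume A: "A \<in> sets (filt n)"
    show "(\<integral>\<^sup>+ x \<in> A. g (x (Suc n)) \<partial>P) = (\<integral>\<^sup>+ x \<in> A. (\<integral>\<^sup>+ \<sigma>'. g \<sigma>' \<partial>step D mu (x n)) \<partial>P)"
      using kern_nn[OF g A] by (simp add: mult.commute)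
  next
    show "(\<lambda>\<omega>. g (\<omega> (Suc n))) \<in> borel_measurable P"
      using measurable_comp[OF coord_meas g] by (simp add: comp_def)
  next
    show "(\<lambda>\<omega>. \<integral>\<^sup>+ \<sigma>'. g \<sigma>' \<partial>step D mu (\<omega> n)) \<in> borel_measurable (filt n)"
      by (rule Kf_meas[OF g])
  qed
qed

lemma cexp:
  assumes h[measurable]: "h \<in> borel_measurable configM"
    and int: "\<And>\<sigma>. integrable (step D mu \<sigma>) h"
  shows "AE \<omega> in P. real_cond_exp P (filt n) (\<lambda>\<omega>. h (\<omega> (Suc n))) \<omega> = (\<integral>\<sigma>'. h \<sigma>' \<partial>step D mu (\<omega> n))"
proof -
  have g1: "(\<lambda>\<sigma>. ennreal (h \<sigma>)) \<in> borel_measurable configM" by measurable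
  have g2: "(\<lambda>\<sigma>. ennreal (- h \<sigma>)) \<in> borel_measurable configM" by measurable
  from nn_cexp[OF g1, of n] nn_cexp[OF g2, of n]
  show ?thesis
  proof eventually_elim
    case (elim \<omega>)
    then show ?case
      unfolding real_cond_exp_def using real_lebesgue_integral_def[OF int[of "\<omega> n"]]
      by simp
  qed
qed

end


lemma F2:
  fixes x l h l' h' :: real
  assumes "l \<le> l'" "h' \<le> h" "l' \<le> h'"
  shows "min (x*l) (x*h) \<le> min (x*l') (x*h')"
proof (cases "0 \<le> x")
  case True
  have "x*l \<le> x*l'" "x*l' \<le> x*h'" using True assms by (auto intro: mult_left_mono)
  then show ?thesis by linarith
next
  case False
  have "x*h \<le> x*h'" "x*h' \<le> x*l'" using False assms by (auto intro: mult_left_mono_neg)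
  then show ?thesis by linarith
qed

lemma F4:
  fixes x :: real and w p q :: "nat \<Rightarrow> real"
  assumes "\<And>t. t \<in> T \<Longrightarrow> 0 \<le> w t"
  shows "min (x * (\<Sum>t\<in>T. w t * min (p t) (q t))) (x * (\<Sum>t\<in>T. w t * max (p t) (q t)))
       = (\<Sum>t\<in>T. w t * min (x * p t) (x * q t))"
proof -
  have le: "(\<Sum>t\<in>T. w t * min (p t) (q t)) \<le> (\<Sum>t\<in>T. w t * max (p t) (q t))"
    using assms by (intro sum_mono mult_left_mono) auto
  show ?thesis
  proof (cases "0 \<le> x")
    case True
    have "min (x * (\<Sum>t\<in>T. w t * min (p t) (q t))) (x * (\<Sum>t\<in>T. w t * max (p t) (q t)))
        = x * (\<Sum>t\<in>T. w t * min (p t) (q t))" using mult_left_mono[OF le True] by (rule min_absorb1)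
    also have "\<dots> = (\<Sum>t\<in>T. w t * (x * min (p t) (q t)))" by (simp add: sum_distrib_left ac_simps)
    also have "\<dots> = (\<Sum>t\<in>T. w t * min (x * p t) (x * q t))" using True by (simp add: min_mult_distrib_left)
    finally show ?thesis .
  next
    case False
    then have "min (x * (\<Sum>t\<in>T. w t * min (p t) (q t))) (x * (\<Sum>t\<in>T. w t * max (p t) (q t)))
        = x * (\<Sum>t\<in>T. w t * max (p t) (q t))" using mult_left_mono_neg[OF le, of x] False by (intro min_absorb2) simp
    also have "\<dots> = (\<Sum>t\<in>T. w t * (x * max (p t) (q t)))" by (simp add: sum_distrib_left ac_simps)
    also have "\<dots> = (\<Sum>t\<in>T. w t * min (x * p t) (x * q t))" using False by (simp add: max_mult_distrib_left)
    finally show ?thesis .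
  qed
qed

lemma S4:
  fixes L H :: real and w u :: "nat \<Rightarrow> real"
  assumes "\<And>i. i \<in> I \<Longrightarrow> 0 \<le> w i"
  shows "(\<Sum>i\<in>I. w i * min (u i * L) (u i * H)) \<le> min ((\<Sum>i\<in>I. w i * u i) * L) ((\<Sum>i\<in>I. w i * u i) * H)"
proof -
  have "(\<Sum>i\<in>I. w i * min (u i * L) (u i * H)) \<le> (\<Sum>i\<in>I. w i * (u i * L))"
    using assms by (intro sum_mono mult_left_mono) auto
  moreover have "(\<Sum>i\<in>I. w i * min (u i * L) (u i * H)) \<le> (\<Sum>i\<in>I. w i * (u i * H))"
    using assms by (intro sum_mono mult_left_mono) auto
  moreover have "(\<Sum>i\<in>I. w i * u i) * L = (\<Sum>i\<in>I. w i * (u i * L))"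
    by (simp add: sum_distrib_right mult.assoc)
  moreover have "(\<Sum>i\<in>I. w i * u i) * H = (\<Sum>i\<in>I. w i * (u i * H))"
    by (simp add: sum_distrib_right mult.assoc)
  ultimately show ?thesis by linarith
qed

lemma S3:
  fixes G :: "nat \<Rightarrow> nat \<Rightarrow> real"
  shows "(\<Sum>i\<le>k. real (k choose i) * (\<Sum>t\<le>k-i. real ((k-i) choose t) * G i t))
       = (\<Sum>j\<le>k. real (k choose j) * (\<Sum>i\<le>j. real (j choose i) * G i (j-i)))"
proof -
  have "(\<Sum>i\<le>k. real (k choose i) * (\<Sum>t\<le>k-i. real ((k-i) choose t) * G i t))
      = (\<Sum>i\<le>k. \<Sum>t\<le>k-i. real (k choose i) * real ((k-i) choose t) * G i t)"
    by (simp add: sum_distrib_left ac_simps)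
  also have "\<dots> = (\<Sum>(i,t)\<in>Sigma {..k} (\<lambda>i. {..k-i}). real (k choose i) * real ((k-i) choose t) * G i t)"
    by (rule sum.Sigma) auto
  also have "Sigma {..k} (\<lambda>i. {..k-i}) = {(i,t). i+t \<le> k}" by auto
  also have "(\<Sum>(i,t)\<in>{(i,t). i+t \<le> k}. real (k choose i) * real ((k-i) choose t) * G i t)
      = (\<Sum>j\<le>k. \<Sum>i\<le>j. real (k choose i) * real ((k-i) choose (j-i)) * G i (j-i))"
    by (rule sum.triangle_reindex_eq)
  also have "\<dots> = (\<Sum>j\<le>k. \<Sum>i\<le>j. real (k choose j) * (real (j choose i) * G i (j-i)))"
  proof (intro sum.cong refl)
    fix j i assume "j \<in> {..k}" "i \<in> {..j}"
    then have "(k choose j) * (j choose i) = (k choose i) * ((k - i) choose (j - i))"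
      by (intro choose_mult) auto
    then have "real (k choose j) * real (j choose i) = real (k choose i) * real ((k - i) choose (j - i))"
      by (metis of_nat_mult)
    then show "real (k choose i) * real ((k-i) choose (j-i)) * G i (j-i) = real (k choose j) * (real (j choose i) * G i (j-i))"
      by (metis mult.assoc)
  qed
  also have "\<dots> = (\<Sum>j\<le>k. real (k choose j) * (\<Sum>i\<le>j. real (j choose i) * G i (j-i)))"
    by (simp add: sum_distrib_left)
  finally show ?thesis .
qed

lemma alg_lo:
  fixes L H l h :: "nat \<Rightarrow> real" and a c :: real and k :: nat
  assumes LH: "\<And>j. j \<le> k \<Longrightarrow> L j \<le> H j"
    and lo: "\<And>s. s \<le> k \<Longrightarrow> l s \<le> (\<Sum>t\<le>s. real (s choose t) * min (c^t * L (s-t)) (c^t * H (s-t)))"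
    and hi: "\<And>s. s \<le> k \<Longrightarrow> (\<Sum>t\<le>s. real (s choose t) * max (c^t * L (s-t)) (c^t * H (s-t))) \<le> h s"
  shows "(\<Sum>i\<le>k. real (k choose i) * min (a^i * l (k-i)) (a^i * h (k-i)))
       \<le> (\<Sum>j\<le>k. real (k choose j) * min ((a+c)^j * L (k-j)) ((a+c)^j * H (k-j)))"
proof -
  define G where "G i t = min (a^i * (c^t * L (k-i-t))) (a^i * (c^t * H (k-i-t)))" for i t
  have "(\<Sum>i\<le>k. real (k choose i) * min (a^i * l (k-i)) (a^i * h (k-i)))
      \<le> (\<Sum>i\<le>k. real (k choose i) * (\<Sum>t\<le>k-i. real ((k-i) choose t) * G i t))"
  proof (intro sum_mono mult_left_mono)
    fix i assume i: "i \<in> {..k}"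
    let ?El = "\<Sum>t\<le>k-i. real ((k-i) choose t) * min (c^t * L (k-i-t)) (c^t * H (k-i-t))"
    let ?Eh = "\<Sum>t\<le>k-i. real ((k-i) choose t) * max (c^t * L (k-i-t)) (c^t * H (k-i-t))"
    have "?El \<le> ?Eh" by (intro sum_mono mult_left_mono) auto
    then have "min (a^i * l (k-i)) (a^i * h (k-i)) \<le> min (a^i * ?El) (a^i * ?Eh)"
      using lo[of "k-i"] hi[of "k-i"] by (intro F2) auto
    also have "\<dots> = (\<Sum>t\<le>k-i. real ((k-i) choose t) * G i t)"
      unfolding G_def by (rule F4) auto
    finally show "min (a^i * l (k-i)) (a^i * h (k-i)) \<le> (\<Sum>t\<le>k-i. real ((k-i) choose t) * G i t)" .
  qed auto
  also have "\<dots> = (\<Sum>j\<le>k. real (k choose j) * (\<Sum>i\<le>j. real (j choose i) * G i (j-i)))"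
    by (rule S3)
  also have "\<dots> \<le> (\<Sum>j\<le>k. real (k choose j) * min ((a+c)^j * L (k-j)) ((a+c)^j * H (k-j)))"
  proof (intro sum_mono mult_left_mono)
    fix j assume j: "j \<in> {..k}"
    have "(\<Sum>i\<le>j. real (j choose i) * G i (j-i))
        = (\<Sum>i\<le>j. real (j choose i) * min ((a^i * c^(j-i)) * L (k-j)) ((a^i * c^(j-i)) * H (k-j)))"
    proof (intro sum.cong refl)
      fix i assume "i \<in> {..j}"
      then have "k - i - (j - i) = k - j" using j by auto
      then show "real (j choose i) * G i (j-i) = real (j choose i) * min ((a^i * c^(j-i)) * L (k-j)) ((a^i * c^(j-i)) * H (k-j))"
        unfolding G_def by (simp add: ac_simps)
    qed
    also have "\<dots> \<le> min ((\<Sum>i\<le>j. real (j choose i) * (a^i * c^(j-i))) * L (k-j))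
                        ((\<Sum>i\<le>j. real (j choose i) * (a^i * c^(j-i))) * H (k-j))"
      by (rule S4) auto
    also have "(\<Sum>i\<le>j. real (j choose i) * (a^i * c^(j-i))) = (a+c)^j"
      by (simp add: binomial_ring ac_simps)
    finally show "(\<Sum>i\<le>j. real (j choose i) * G i (j-i)) \<le> min ((a+c)^j * L (k-j)) ((a+c)^j * H (k-j))" .
  qed auto
  finally show ?thesis .
qed



lemma imul_pt: "imul (x, x) v = (min (x * fst v) (x * snd v), max (x * fst v) (x * snd v))"
  by (simp add: imul_def Let_def insert_commute)

lemma otimes_pw_fst: "fst (otimes (pw b) V k) = (\<Sum>i\<le>k. real (k choose i) * min (b^i * fst (V (k-i))) (b^i * snd (V (k-i))))"
  by (simp add: otimes_def pw_def imul_pt)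

lemma otimes_pw_snd: "snd (otimes (pw b) V k) = (\<Sum>i\<le>k. real (k choose i) * max (b^i * fst (V (k-i))) (b^i * snd (V (k-i))))"
  by (simp add: otimes_def pw_def imul_pt)

lemma int_min:
  fixes lo hi :: "'a \<Rightarrow> real"
  assumes "integrable M lo" "integrable M hi" "\<And>x. lo x \<le> hi x"
  shows "(\<integral>x. min (y * lo x) (y * hi x) \<partial>M) = min (y * (\<integral>x. lo x \<partial>M)) (y * (\<integral>x. hi x \<partial>M))"
    and "(\<integral>x. max (y * lo x) (y * hi x) \<partial>M) = max (y * (\<integral>x. lo x \<partial>M)) (y * (\<integral>x. hi x \<partial>M))"
proof -
  have LH: "(\<integral>x. lo x \<partial>M) \<le> (\<integral>x. hi x \<partial>M)" using assms by (intro integral_mono) auto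
  have "(\<integral>x. min (y * lo x) (y * hi x) \<partial>M) = min (y * (\<integral>x. lo x \<partial>M)) (y * (\<integral>x. hi x \<partial>M))
      \<and> (\<integral>x. max (y * lo x) (y * hi x) \<partial>M) = max (y * (\<integral>x. lo x \<partial>M)) (y * (\<integral>x. hi x \<partial>M))"
  proof (cases "0 \<le> y")
    case True
    then have "\<And>x. y * lo x \<le> y * hi x" using assms(3) by (intro mult_left_mono)
    moreover have "y * (\<integral>x. lo x \<partial>M) \<le> y * (\<integral>x. hi x \<partial>M)" using LH True by (intro mult_left_mono)
    ultimately show ?thesis by (simp add: min_absorb1 max_absorb2)
  next
    case False
    then have "\<And>x. y * hi x \<le> y * lo x" using assms(3) by (intro mult_left_mono_neg) auto
    moreover have "y * (\<integral>x. hi x \<partial>M) \<le> y * (\<integral>x. lo x \<partial>M)" using LH False by (intro mult_left_mono_neg) auto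
    ultimately show ?thesis by (simp add: min_absorb2 max_absorb1)
  qed
  then show "(\<integral>x. min (y * lo x) (y * hi x) \<partial>M) = min (y * (\<integral>x. lo x \<partial>M)) (y * (\<integral>x. hi x \<partial>M))"
    and "(\<integral>x. max (y * lo x) (y * hi x) \<partial>M) = max (y * (\<integral>x. lo x \<partial>M)) (y * (\<integral>x. hi x \<partial>M))"
    by auto
qed

lemma one_step:
  fixes M :: "'a measure" and A :: "'a \<Rightarrow> real" and \<psi> :: "'a \<Rightarrow> ivec" and a c :: real and V0 :: ivec
  assumes meas: "\<forall>k\<le>m. (\<lambda>x. fst (\<psi> x k)) \<in> borel_measurable M \<and> (\<lambda>x. snd (\<psi> x k)) \<in> borel_measurable M"
    and ord: "\<forall>x. \<forall>k\<le>m. fst (\<psi> x k) \<le> snd (\<psi> x k)"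
    and AEc: "AE x in M. A x = a + c"
    and Ameas: "A \<in> borel_measurable M"
    and hyp: "\<forall>k\<le>m. integrable M (\<lambda>x. fst (otimes (pw (A x - a)) (\<psi> x) k))
                   \<and> integrable M (\<lambda>x. snd (otimes (pw (A x - a)) (\<psi> x) k))
                   \<and> fst (V0 k) \<le> (\<integral>x. fst (otimes (pw (A x - a)) (\<psi> x) k) \<partial>M)
                   \<and> (\<integral>x. snd (otimes (pw (A x - a)) (\<psi> x) k) \<partial>M) \<le> snd (V0 k)"
    and km: "k \<le> m"
  shows "integrable M (\<lambda>x. fst (otimes (pw (A x)) (\<psi> x) k))
       \<and> integrable M (\<lambda>x. snd (otimes (pw (A x)) (\<psi> x) k))
       \<and> fst (otimes (pw a) V0 k) \<le> (\<integral>x. fst (otimes (pw (A x)) (\<psi> x) k) \<partial>M)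
       \<and> (\<integral>x. snd (otimes (pw (A x)) (\<psi> x) k) \<partial>M) \<le> snd (otimes (pw a) V0 k)"
proof -
  define lo where "lo j x = fst (\<psi> x j)" for j x
  define hi where "hi j x = snd (\<psi> x j)" for j x
  define Fl where "Fl b j x = (\<Sum>i\<le>j. real (j choose i) * min (b^i * lo (j-i) x) (b^i * hi (j-i) x))" for b j x
  define Fh where "Fh b j x = (\<Sum>i\<le>j. real (j choose i) * max (b^i * lo (j-i) x) (b^i * hi (j-i) x))" for b j x
  have eqc: "AE x in M. fst (otimes (pw (A x - a)) (\<psi> x) j) = Fl c j x \<and> snd (otimes (pw (A x - a)) (\<psi> x) j) = Fh c j x" for j
    using AEc by eventually_elim (simp add: otimes_pw_fst otimes_pw_snd Fl_def Fh_def lo_def hi_def)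
  have eqac: "AE x in M. fst (otimes (pw (A x)) (\<psi> x) j) = Fl (a+c) j x \<and> snd (otimes (pw (A x)) (\<psi> x) j) = Fh (a+c) j x" for j
    using AEc by eventually_elim (simp add: otimes_pw_fst otimes_pw_snd Fl_def Fh_def lo_def hi_def)
  have measl[measurable]: "lo j \<in> borel_measurable M" "hi j \<in> borel_measurable M" if "j \<le> m" for j
    using meas that unfolding lo_def hi_def by auto
  have ordl: "lo j x \<le> hi j x" if "j \<le> m" for j x using ord that unfolding lo_def hi_def by auto
  have intFl: "integrable M (Fl c j)" "integrable M (Fh c j)" if "j \<le> m" for j
  proof -
    have "integrable M (\<lambda>x. fst (otimes (pw (A x - a)) (\<psi> x) j))" "integrable M (\<lambda>x. snd (otimes (pw (A x - a)) (\<psi> x) j))"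
      using hyp that by auto
    moreover have "Fl c j \<in> borel_measurable M" "Fh c j \<in> borel_measurable M"
      unfolding Fl_def Fh_def using that measl
      by (auto intro!: borel_measurable_sum borel_measurable_times borel_measurable_min borel_measurable_max)
    ultimately show "integrable M (Fl c j)" "integrable M (Fh c j)"
      using eqc[of j] by (auto intro: integrable_cong_AE_imp)
  qed
  have intl: "integrable M (lo j) \<and> integrable M (hi j)" if "j \<le> m" for j
    using that
  proof (induction j rule: less_induct)
    case (less j)
    show ?case
    proof (cases j)
      case 0
      have "Fl c 0 = lo 0" "Fh c 0 = hi 0" using ordl[of 0] by (auto simp: Fl_def Fh_def fun_eq_iff)
      then show ?thesis using intFl[of 0] 0 by auto
    next
      case (Suc j')
      define Rl where "Rl x = (\<Sum>i\<le>j'. real (j choose Suc i) * min (c^Suc i * lo (j - Suc i) x) (c^Suc i * hi (j - Suc i) x))" for x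
      define Rh where "Rh x = (\<Sum>i\<le>j'. real (j choose Suc i) * max (c^Suc i * lo (j - Suc i) x) (c^Suc i * hi (j - Suc i) x))" for x
      have "Fl c j x = lo j x + Rl x" "Fh c j x = hi j x + Rh x" for x
        unfolding Fl_def Fh_def Rl_def Rh_def Suc sum.atMost_Suc_shift
        using ordl[of "Suc j'" x] less.prems Suc by (auto simp: min_absorb1 max_absorb2)
      then have eqs: "lo j = (\<lambda>x. Fl c j x - Rl x)" "hi j = (\<lambda>x. Fh c j x - Rh x)" by (auto simp: fun_eq_iff)
      have IH: "integrable M (lo (j - Suc i)) \<and> integrable M (hi (j - Suc i))" for i
        using less.IH[of "j - Suc i"] less.prems Suc by auto
      have "integrable M Rl" "integrable M Rh"
        unfolding Rl_def Rh_def using IH by (auto intro!: integrable_sum integrable_mult_right integrable_min integrable_max)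
      then show ?thesis using intFl[OF less.prems] eqs by auto
    qed
  qed
  define L where "L j = (\<integral>x. lo j x \<partial>M)" for j
  define H where "H j = (\<integral>x. hi j x \<partial>M)" for j
  have LH: "L j \<le> H j" if "j \<le> m" for j
    unfolding L_def H_def using intl[OF that] ordl[OF that] by (intro integral_mono) auto
  have intF: "integral\<^sup>L M (Fl b j) = (\<Sum>i\<le>j. real (j choose i) * min (b^i * L (j-i)) (b^i * H (j-i)))
            \<and> integral\<^sup>L M (Fh b j) = (\<Sum>i\<le>j. real (j choose i) * max (b^i * L (j-i)) (b^i * H (j-i)))
            \<and> integrable M (Fl b j) \<and> integrable M (Fh b j)" if "j \<le> m" for b j
  proof -
    have i: "integrable M (lo (j-i))" "integrable M (hi (j-i))" for i using intl[of "j-i"] that by auto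
    have o: "lo (j-i) x \<le> hi (j-i) x" for i x using ordl[of "j-i"] that by auto
    show ?thesis
      unfolding Fl_def Fh_def L_def H_def
      using int_min[OF i o]
      by (simp add: integral_sum integrable_sum integrable_min integrable_max i)
  qed
  have hl: "fst (V0 s) \<le> (\<Sum>t\<le>s. real (s choose t) * min (c^t * L (s-t)) (c^t * H (s-t)))"
   and hh: "(\<Sum>t\<le>s. real (s choose t) * max (c^t * L (s-t)) (c^t * H (s-t))) \<le> snd (V0 s)"
    if "s \<le> m" for s
  proof -
    have "(\<integral>x. fst (otimes (pw (A x - a)) (\<psi> x) s) \<partial>M) = integral\<^sup>L M (Fl c s)"
      "(\<integral>x. snd (otimes (pw (A x - a)) (\<psi> x) s) \<partial>M) = integral\<^sup>L M (Fh c s)"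
    proof -
      have i1: "integrable M (\<lambda>x. fst (otimes (pw (A x - a)) (\<psi> x) s))" "integrable M (\<lambda>x. snd (otimes (pw (A x - a)) (\<psi> x) s))"
        using hyp that by auto
      have i2: "integrable M (Fl c s)" "integrable M (Fh c s)" using intF[OF that, of c] by auto
      have a1: "AE x in M. fst (otimes (pw (A x - a)) (\<psi> x) s) = Fl c s x"
        "AE x in M. snd (otimes (pw (A x - a)) (\<psi> x) s) = Fh c s x" using eqc[of s] by auto
      show "(\<integral>x. fst (otimes (pw (A x - a)) (\<psi> x) s) \<partial>M) = integral\<^sup>L M (Fl c s)"
        by (rule integral_cong_AE[OF borel_measurable_integrable[OF i1(1)] borel_measurable_integrable[OF i2(1)] a1(1)])
      show "(\<integral>x. snd (otimes (pw (A x - a)) (\<psi> x) s) \<partial>M) = integral\<^sup>L M (Fh c s)"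
        by (rule integral_cong_AE[OF borel_measurable_integrable[OF i1(2)] borel_measurable_integrable[OF i2(2)] a1(2)])
    qed
    then show "fst (V0 s) \<le> (\<Sum>t\<le>s. real (s choose t) * min (c^t * L (s-t)) (c^t * H (s-t)))"
      "(\<Sum>t\<le>s. real (s choose t) * max (c^t * L (s-t)) (c^t * H (s-t))) \<le> snd (V0 s)"
      using hyp that intF[OF that, of c] by auto
  qed
  have int1: "integrable M (\<lambda>x. fst (otimes (pw (A x)) (\<psi> x) k))"
    "integrable M (\<lambda>x. snd (otimes (pw (A x)) (\<psi> x) k))"
  proof -
    have mf: "(\<lambda>x. fst (\<psi> x j)) \<in> borel_measurable M" "(\<lambda>x. snd (\<psi> x j)) \<in> borel_measurable M"
      if "j \<le> m" for j using measl[OF that] unfolding lo_def hi_def by auto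
    have m1: "(\<lambda>x. fst (otimes (pw (A x)) (\<psi> x) k)) \<in> borel_measurable M"
      unfolding otimes_pw_fst
    proof (intro borel_measurable_sum)
      fix i assume "i \<in> {..k}" then have "k - i \<le> m" using km by auto
      note [measurable] = mf[OF this] Ameas
      show "(\<lambda>x. real (k choose i) * min (A x ^ i * fst (\<psi> x (k - i))) (A x ^ i * snd (\<psi> x (k - i)))) \<in> borel_measurable M"
        by measurable
    qed
    have m2: "(\<lambda>x. snd (otimes (pw (A x)) (\<psi> x) k)) \<in> borel_measurable M"
      unfolding otimes_pw_snd
    proof (intro borel_measurable_sum)
      fix i assume "i \<in> {..k}" then have "k - i \<le> m" using km by auto
      note [measurable] = mf[OF this] Ameas
      show "(\<lambda>x. real (k choose i) * max (A x ^ i * fst (\<psi> x (k - i))) (A x ^ i * snd (\<psi> x (k - i)))) \<in> borel_measurable M"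
        by measurable
    qed
    have i2: "integrable M (Fl (a+c) k)" "integrable M (Fh (a+c) k)" using intF[OF km, of "a+c"] by auto
    have a1: "AE x in M. Fl (a+c) k x = fst (otimes (pw (A x)) (\<psi> x) k)"
      "AE x in M. Fh (a+c) k x = snd (otimes (pw (A x)) (\<psi> x) k)" using eqac[of k] by auto
    show "integrable M (\<lambda>x. fst (otimes (pw (A x)) (\<psi> x) k))"
      by (rule integrable_cong_AE_imp[OF i2(1) m1 a1(1)])
    show "integrable M (\<lambda>x. snd (otimes (pw (A x)) (\<psi> x) k))"
      by (rule integrable_cong_AE_imp[OF i2(2) m2 a1(2)])
  qed
  have eqI: "(\<integral>x. fst (otimes (pw (A x)) (\<psi> x) k) \<partial>M) = integral\<^sup>L M (Fl (a+c) k)"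
      "(\<integral>x. snd (otimes (pw (A x)) (\<psi> x) k) \<partial>M) = integral\<^sup>L M (Fh (a+c) k)"
  proof -
    have i2: "integrable M (Fl (a+c) k)" "integrable M (Fh (a+c) k)" using intF[OF km, of "a+c"] by auto
    have a1: "AE x in M. fst (otimes (pw (A x)) (\<psi> x) k) = Fl (a+c) k x"
      "AE x in M. snd (otimes (pw (A x)) (\<psi> x) k) = Fh (a+c) k x" using eqac[of k] by auto
    show "(\<integral>x. fst (otimes (pw (A x)) (\<psi> x) k) \<partial>M) = integral\<^sup>L M (Fl (a+c) k)"
      by (rule integral_cong_AE[OF borel_measurable_integrable[OF int1(1)] borel_measurable_integrable[OF i2(1)] a1(1)])
    show "(\<integral>x. snd (otimes (pw (A x)) (\<psi> x) k) \<partial>M) = integral\<^sup>L M (Fh (a+c) k)"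
      by (rule integral_cong_AE[OF borel_measurable_integrable[OF int1(2)] borel_measurable_integrable[OF i2(2)] a1(2)])
  qed
  have low: "fst (otimes (pw a) V0 k) \<le> (\<Sum>j\<le>k. real (k choose j) * min ((a+c)^j * L (k-j)) ((a+c)^j * H (k-j)))"
    unfolding otimes_pw_fst
    by (rule alg_lo) (use LH hl hh km in auto)
  have neg1: "min (- u) (- v) = - max v u" for u v :: real
    by (auto simp: min_def max_def)
  have neg2: "max (- u) (- v) = - min v u" for u v :: real
    by (auto simp: min_def max_def)
  have upp0: "(\<Sum>i\<le>k. real (k choose i) * min (a^i * (- snd (V0 (k-i)))) (a^i * (- fst (V0 (k-i)))))
       \<le> (\<Sum>j\<le>k. real (k choose j) * min ((a+c)^j * (- H (k-j))) ((a+c)^j * (- L (k-j))))"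
  proof (rule alg_lo[where L="\<lambda>j. - H j" and H="\<lambda>j. - L j" and l="\<lambda>j. - snd (V0 j)" and h="\<lambda>j. - fst (V0 j)"])
    fix j assume "j \<le> k" then show "- H j \<le> - L j" using LH km by auto
  next
    fix s assume s: "s \<le> k"
    show "- snd (V0 s) \<le> (\<Sum>t\<le>s. real (s choose t) * min (c ^ t * - H (s - t)) (c ^ t * - L (s - t)))"
      using hh[of s] s km by (simp add: neg1 sum_negf)
    show "(\<Sum>t\<le>s. real (s choose t) * max (c ^ t * - H (s - t)) (c ^ t * - L (s - t))) \<le> - fst (V0 s)"
      using hl[of s] s km by (simp add: neg2 sum_negf)
  qed
  have upp: "(\<Sum>j\<le>k. real (k choose j) * max ((a+c)^j * L (k-j)) ((a+c)^j * H (k-j))) \<le> snd (otimes (pw a) V0 k)"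
    using upp0 unfolding otimes_pw_snd by (simp add: neg1 sum_negf)
  show ?thesis using int1 low upp eqI intF[OF km, of "a+c"] by simp
qed



lemma ret_AE: "acc x = r \<Longrightarrow> AE y in return configM x. acc y = r"
  by (subst AE_return) auto

lemma acc_pred: "{x \<in> space configM. acc x = r} \<in> sets configM"
  by measurable

lemma acc_step:
  assumes "\<forall>d. sets (mu d) = sets borel"
  shows "\<exists>c. AE \<sigma>' in step D mu \<sigma>. acc \<sigma>' = acc \<sigma> + c"
  using assms
proof (induction D mu \<sigma> rule: step.induct)
  case (4 D mu \<gamma> c K \<alpha>)
  show ?case by (rule exI[of _ c]) (simp only: step.simps, rule ret_AE, simp add: acc_def)
next
  case (6 D mu \<gamma> x d K \<alpha>)
  have sd: "sets (mu d) = sets borel" using 6 by auto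
  show ?case
    apply (rule exI[of _ 0])
    apply (simp only: step.simps)
    apply (subst AE_distr_iff[OF sample_map_meas[OF sd] acc_pred])
    apply (simp add: acc_def)
    done
next
  case (8 D mu \<gamma> p S1 S2 K \<alpha>)
  show ?case
    apply (rule exI[of _ 0])
    apply (simp only: step.simps)
    apply (subst AE_distr_iff[OF _ acc_pred])
     apply simp
    apply (simp add: acc_def)
    done
qed (rule exI[of _ 0], simp only: step.simps split: if_split, (intro conjI impI ret_AE; simp add: acc_def))+

lemma G_meas:
  fixes \<psi> :: "'a \<Rightarrow> ivec"
  assumes meas: "\<forall>k\<le>m. (\<lambda>x. fst (\<psi> x k)) \<in> borel_measurable N \<and> (\<lambda>x. snd (\<psi> x k)) \<in> borel_measurable N"
    and Ameas: "A \<in> borel_measurable N" and km: "k \<le> m"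
  shows "(\<lambda>x. fst (otimes (pw (A x)) (\<psi> x) k)) \<in> borel_measurable N"
    "(\<lambda>x. snd (otimes (pw (A x)) (\<psi> x) k)) \<in> borel_measurable N"
proof -
  have mf: "(\<lambda>x. fst (\<psi> x j)) \<in> borel_measurable N" "(\<lambda>x. snd (\<psi> x j)) \<in> borel_measurable N"
    if "j \<le> m" for j using meas that by auto
  show "(\<lambda>x. fst (otimes (pw (A x)) (\<psi> x) k)) \<in> borel_measurable N"
    unfolding otimes_pw_fst
  proof (intro borel_measurable_sum)
    fix i assume "i \<in> {..k}" then have "k - i \<le> m" using km by auto
    note [measurable] = mf[OF this] Ameas
    show "(\<lambda>x. real (k choose i) * min (A x ^ i * fst (\<psi> x (k - i))) (A x ^ i * snd (\<psi> x (k - i)))) \<in> borel_measurable N"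
      by measurable
  qed
  show "(\<lambda>x. snd (otimes (pw (A x)) (\<psi> x) k)) \<in> borel_measurable N"
    unfolding otimes_pw_snd
  proof (intro borel_measurable_sum)
    fix i assume "i \<in> {..k}" then have "k - i \<le> m" using km by auto
    note [measurable] = mf[OF this] Ameas
    show "(\<lambda>x. real (k choose i) * max (A x ^ i * fst (\<psi> x (k - i))) (A x ^ i * snd (\<psi> x (k - i)))) \<in> borel_measurable N"
      by measurable
  qed
qed

theorem lemma4p2:
  fixes D :: "'f::finite \<Rightarrow> ('v::finite, 'f, 'd) stmt"
    and Smain :: "('v, 'f, 'd) stmt"
    and mu :: "'d \<Rightarrow> real measure"
    and P :: "(nat \<Rightarrow> ('v, 'f, 'd) config) measure"
    and m :: nat
    and \<phi> :: "('v, 'f, 'd) config \<Rightarrow> ivec"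
  assumes dists: "\<forall>d. prob_space (mu d) \<and> sets (mu d) = sets borel"
    and wf_main: "wf_stmt Smain"
    and wf_D: "\<forall>f. wf_stmt (D f)"
    and law: "is_trace_law D mu Smain P"
    and pot: "expected_potential D mu m \<phi>"
  shows "\<forall>n. AE \<omega> in P.
           ivec_le m
             (\<lambda>k. (real_cond_exp P (filt n) (\<lambda>\<omega>'. fst (Ytrace \<phi> (Suc n) \<omega>' k)) \<omega>,
                    real_cond_exp P (filt n) (\<lambda>\<omega>'. snd (Ytrace \<phi> (Suc n) \<omega>' k)) \<omega>))
             (Ytrace \<phi> n \<omega>)"
proof
  fix n
  interpret tr D mu Smain P using dists law by unfold_locales
  have sd: "\<forall>d. sets (mu d) = sets borel" using dists by auto
  have measC: "\<forall>k\<le>m. (\<lambda>\<sigma>. fst (\<phi> \<sigma> k)) \<in> borel_measurable configM \<and> (\<lambda>\<sigma>. snd (\<phi> \<sigma> k)) \<in> borel_measurable configM"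
    using pot by (simp add: expected_potential_def)
  have ordC: "\<forall>\<sigma>. \<forall>k\<le>m. fst (\<phi> \<sigma> k) \<le> snd (\<phi> \<sigma> k)"
    using pot by (simp add: expected_potential_def)
  have hypC: "\<forall>k\<le>m.
        integrable (step D mu \<sigma>) (\<lambda>\<sigma>'. fst (otimes (pw (acc \<sigma>' - acc \<sigma>)) (\<phi> \<sigma>') k)) \<and>
        integrable (step D mu \<sigma>) (\<lambda>\<sigma>'. snd (otimes (pw (acc \<sigma>' - acc \<sigma>)) (\<phi> \<sigma>') k)) \<and>
        fst (\<phi> \<sigma> k) \<le> (\<integral>\<sigma>'. fst (otimes (pw (acc \<sigma>' - acc \<sigma>)) (\<phi> \<sigma>') k) \<partial>step D mu \<sigma>) \<and>
        (\<integral>\<sigma>'. snd (otimes (pw (acc \<sigma>' - acc \<sigma>)) (\<phi> \<sigma>') k) \<partial>step D mu \<sigma>) \<le> snd (\<phi> \<sigma> k)" for \<sigma>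
    using pot[unfolded expected_potential_def] by blast
  have OS: "integrable (step D mu \<sigma>) (\<lambda>x. fst (otimes (pw (acc x)) (\<phi> x) k))
       \<and> integrable (step D mu \<sigma>) (\<lambda>x. snd (otimes (pw (acc x)) (\<phi> x) k))
       \<and> fst (otimes (pw (acc \<sigma>)) (\<phi> \<sigma>) k) \<le> (\<integral>x. fst (otimes (pw (acc x)) (\<phi> x) k) \<partial>step D mu \<sigma>)
       \<and> (\<integral>x. snd (otimes (pw (acc x)) (\<phi> x) k) \<partial>step D mu \<sigma>) \<le> snd (otimes (pw (acc \<sigma>)) (\<phi> \<sigma>) k)"
    if km: "k \<le> m" for \<sigma> k
  proof -
    obtain c where c: "AE \<sigma>' in step D mu \<sigma>. acc \<sigma>' = acc \<sigma> + c" using acc_step[OF sd] by blast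
    show ?thesis
    proof (rule one_step[OF _ ordC c _ hypC km])
      show "\<forall>k\<le>m. (\<lambda>x. fst (\<phi> x k)) \<in> borel_measurable (step D mu \<sigma>) \<and> (\<lambda>x. snd (\<phi> x k)) \<in> borel_measurable (step D mu \<sigma>)"
        using measC meas_step by blast
      show "acc \<in> borel_measurable (step D mu \<sigma>)" using meas_step acc_meas by blast
    qed
  qed
  have AEk: "AE \<omega> in P. k \<le> m \<longrightarrow>
       fst (Ytrace \<phi> n \<omega> k) \<le> real_cond_exp P (filt n) (\<lambda>\<omega>'. fst (Ytrace \<phi> (Suc n) \<omega>' k)) \<omega>
     \<and> real_cond_exp P (filt n) (\<lambda>\<omega>'. snd (Ytrace \<phi> (Suc n) \<omega>' k)) \<omega> \<le> snd (Ytrace \<phi> n \<omega> k)" for k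
  proof (cases "k \<le> m")
    case True
    have m1: "(\<lambda>x. fst (otimes (pw (acc x)) (\<phi> x) k)) \<in> borel_measurable configM"
      and m2: "(\<lambda>x. snd (otimes (pw (acc x)) (\<phi> x) k)) \<in> borel_measurable configM"
      using G_meas[OF measC acc_meas True] by auto
    have c1: "AE \<omega> in P. real_cond_exp P (filt n) (\<lambda>\<omega>. fst (otimes (pw (acc (\<omega> (Suc n)))) (\<phi> (\<omega> (Suc n))) k)) \<omega>
        = (\<integral>x. fst (otimes (pw (acc x)) (\<phi> x) k) \<partial>step D mu (\<omega> n))"
      by (rule cexp[OF m1]) (use OS[OF True] in blast)
    have c2: "AE \<omega> in P. real_cond_exp P (filt n) (\<lambda>\<omega>. snd (otimes (pw (acc (\<omega> (Suc n)))) (\<phi> (\<omega> (Suc n))) k)) \<omega>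
        = (\<integral>x. snd (otimes (pw (acc x)) (\<phi> x) k) \<partial>step D mu (\<omega> n))"
      by (rule cexp[OF m2]) (use OS[OF True] in blast)
    from c1 c2 show ?thesis
    proof eventually_elim
      case (elim \<omega>)
      then show ?case using OS[OF True, of "\<omega> n"] by (simp add: Ytrace_def)
    qed
  qed simp
  then have "AE \<omega> in P. \<forall>k. k \<le> m \<longrightarrow>
       fst (Ytrace \<phi> n \<omega> k) \<le> real_cond_exp P (filt n) (\<lambda>\<omega>'. fst (Ytrace \<phi> (Suc n) \<omega>' k)) \<omega>
     \<and> real_cond_exp P (filt n) (\<lambda>\<omega>'. snd (Ytrace \<phi> (Suc n) \<omega>' k)) \<omega> \<le> snd (Ytrace \<phi> n \<omega> k)"
    by (simp add: AE_all_countable)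
  then show "AE \<omega> in P.
           ivec_le m
             (\<lambda>k. (real_cond_exp P (filt n) (\<lambda>\<omega>'. fst (Ytrace \<phi> (Suc n) \<omega>' k)) \<omega>,
                    real_cond_exp P (filt n) (\<lambda>\<omega>'. snd (Ytrace \<phi> (Suc n) \<omega>' k)) \<omega>))
             (Ytrace \<phi> n \<omega>)"
    by eventually_elim (simp add: ivec_le_def)
qed


end
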